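(* For $n\ge0$ let $F_n(x,q;q)=\sum_{j=0}^{\lfloor n/2\rfloor}q^{j^2}\begin{bmatrix} n-j\\ j\end{bmatrix}_q x^{n-2j}$. Then for every $n\ge1$, $$\det\left(\begin{bmatrix} i+1\\ j+1\end{bmatrix}_q x^2-\begin{bmatrix} i\\ j-1\end{bmatrix}_q\right)_{i,j=0}^{n-1}=x^nF_n(x,q;q).$$
   Context: Here $q$ is an indeterminate and for integers $m\ge0$ and $j$ the $q$-binomial coefficient is $\begin{bmatrix} m\\ j\end{bmatrix}_q=\frac{(1-q^m)(1-q^{m-1})\cdots(1-q^{m-j+1})}{(1-q)(1-q^2)\cdots(1-q^j)}$ for $0\le j\le m$ and $0$ otherwise. *)

theory Defs
  imports "HOL-Computational_Algebra.Polynomial" "Jordan_Normal_Form.Determinant"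
begin

text \<open>Gaussian (q-binomial) coefficient as an integer polynomial in q, defined literally as the
  quotient of the two products (the division is exact in int poly).\<close>
definition qbinom :: "nat \<Rightarrow> int \<Rightarrow> int poly" where
  "qbinom m j = (if 0 \<le> j \<and> j \<le> int m
     then (\<Prod>i<nat j. 1 - monom 1 (m - i)) div (\<Prod>i<nat j. 1 - monom 1 (i + 1))
     else 0)"

text \<open>The bivariate polynomial ring Z[q][x]: x is the outer indeterminate, q the inner one.\<close>
definition xv :: "int poly poly" where "xv = [:0, 1:]"
definition qv :: "int poly poly" where "qv = [:[:0, 1:]:]"

definition Fn :: "nat \<Rightarrow> int poly poly" where
  "Fn n = (\<Sum>j = 0..n div 2. qv ^ (j^2) * [:qbinom (n - j) (int j):] * xv ^ (n - 2 * j))"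

end

theory Submission
  imports Defs
begin

fun qb :: "nat \<Rightarrow> nat \<Rightarrow> int poly" where
  "qb _ 0 = 1"
| "qb 0 (Suc j) = 0"
| "qb (Suc m) (Suc j) = qb m j + monom 1 (Suc j) * qb m (Suc j)"

definition Q :: "nat \<Rightarrow> int poly" where "Q m = (\<Prod>i<m. 1 - monom 1 (Suc i))"

lemma qb_zero: "m < j \<Longrightarrow> qb m j = 0"
proof (induction m arbitrary: j)
  case 0 then show ?case by (cases j) auto
next
  case (Suc m) then show ?case by (cases j) auto
qed

lemma qb_diag[simp]: "qb n n = 1"
  by (induction n) (auto simp: qb_zero)

lemma Q_Suc: "Q (Suc m) = Q m * (1 - monom 1 (Suc m))"
  by (simp add: Q_def)

lemma Q_0[simp]: "Q 0 = 1" by (simp add: Q_def)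

lemma Q_nz: "Q m \<noteq> 0"
proof -
  have "1 - monom (1::int) (Suc i) \<noteq> 0" for i
  proof
    assume "1 - monom (1::int) (Suc i) = 0"
    then have "coeff (1 - monom (1::int) (Suc i)) (Suc i) = 0" by simp
    then show False by (simp add: coeff_monom)
  qed
  then show ?thesis unfolding Q_def by (simp add: prod_zero_iff)
qed

lemma qb_Q: "k \<le> n \<Longrightarrow> qb n k * Q k * Q (n - k) = Q n"
proof (induction n arbitrary: k)
  case 0 then show ?case by simp
next
  case (Suc n)
  show ?case
  proof (cases k)
    case 0 then show ?thesis by simp
  next
    case (Suc j)
    have j: "j \<le> n" using Suc.prems Suc by simp
    have A: "qb n j * Q (Suc j) * Q (n - j) = Q n * (1 - monom 1 (Suc j))"
      using Suc.IH[OF j] by (simp add: Q_Suc algebra_simps)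
    have B: "monom 1 (Suc j) * qb n (Suc j) * Q (Suc j) * Q (n - j)
             = Q n * (monom 1 (Suc j) - monom 1 (Suc n))"
    proof (cases "j = n")
      case True then show ?thesis by (simp add: qb_zero)
    next
      case False
      then have j2: "Suc j \<le> n" using j by simp
      have e: "n - j = Suc (n - Suc j)" using j2 by simp
      have m: "monom (1::int) (Suc j) * monom 1 (n - j) = monom 1 (Suc n)"
        using j2 by (simp add: mult_monom)
      have "monom 1 (Suc j) * qb n (Suc j) * Q (Suc j) * Q (n - j)
          = monom 1 (Suc j) * (qb n (Suc j) * Q (Suc j) * Q (n - Suc j)) * (1 - monom 1 (n - j))"
        by (simp add: e Q_Suc algebra_simps)
      also have "\<dots> = Q n * (monom 1 (Suc j) - monom 1 (Suc j) * monom 1 (n - j))"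
        using Suc.IH[OF j2] by (simp add: algebra_simps)
      finally show ?thesis using m by simp
    qed
    have "qb (Suc n) k * Q k * Q (Suc n - k) =
       qb n j * Q (Suc j) * Q (n - j) + monom 1 (Suc j) * qb n (Suc j) * Q (Suc j) * Q (n - j)"
      using Suc by (simp add: algebra_simps)
    also have "\<dots> = Q (Suc n)" unfolding A B by (simp add: Q_Suc algebra_simps)
    finally show ?thesis .
  qed
qed

lemma N_split: "j \<le> m \<Longrightarrow> Q m = Q (m - j) * (\<Prod>i<j. 1 - monom 1 (m - i))"
proof (induction j)
  case 0 then show ?case by simp
next
  case (Suc j)
  have e: "m - j = Suc (m - Suc j)" using Suc.prems by simp
  show ?case using Suc by (simp add: e Q_Suc algebra_simps)
qed

lemma qbinom_eq: "qbinom m (int j) = qb m j"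
proof (cases "j \<le> m")
  case True
  have "Q (m - j) * (qb m j * Q j) = Q (m - j) * (\<Prod>i<j. 1 - monom 1 (m - i))"
    using qb_Q[OF True] N_split[OF True] by (simp add: algebra_simps)
  then have e: "(\<Prod>i<j. 1 - monom 1 (m - i)) = qb m j * Q j" using Q_nz by simp
  have "qbinom m (int j) = (\<Prod>i<j. 1 - monom 1 (m - i)) div Q j"
    using True by (simp add: qbinom_def Q_def)
  also have "\<dots> = qb m j" unfolding e using Q_nz by simp
  finally show ?thesis .
next
  case False then show ?thesis by (simp add: qbinom_def qb_zero)
qed

lemma qbinom_m1: "qbinom m (int j - 1) = (if j = 0 then 0 else qb m (j - 1))"
proof (cases j)
  case 0 then show ?thesis by (simp add: qbinom_def)
next
  case (Suc k)
  then have "int j - 1 = int k" by simp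
  then show ?thesis using Suc qbinom_eq by simp
qed

lemma pascal2: "qb (Suc m) (Suc j) = monom 1 (m - j) * qb m j + qb m (Suc j)"
proof (cases "j \<le> m")
  case False then show ?thesis by (simp add: qb_zero)
next
  case True
  have "(monom 1 (m - j) * qb m j + qb m (Suc j)) * Q (Suc j) * Q (m - j) = Q (Suc m)"
  proof (cases "j = m")
    case True then show ?thesis by (simp add: qb_zero Q_Suc)
  next
    case False
    with True have j2: "Suc j \<le> m" by simp
    have e: "m - j = Suc (m - Suc j)" using j2 by simp
    have m: "monom (1::int) (m - j) * monom 1 (Suc j) = monom 1 (Suc m)"
      using j2 by (simp add: mult_monom)
    have "(monom 1 (m - j) * qb m j + qb m (Suc j)) * Q (Suc j) * Q (m - j)
      = monom 1 (m - j) * (qb m j * Q j * Q (m - j)) * (1 - monom 1 (Suc j))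
        + (qb m (Suc j) * Q (Suc j) * Q (m - Suc j)) * (1 - monom 1 (m - j))"
      by (simp add: e Q_Suc algebra_simps)
    also have "\<dots> = Q m * (1 - monom 1 (m - j) * monom 1 (Suc j))"
      using qb_Q[OF True] qb_Q[OF j2] by (simp add: algebra_simps)
    finally show ?thesis using m by (simp add: Q_Suc)
  qed
  moreover have "qb (Suc m) (Suc j) * Q (Suc j) * Q (m - j) = Q (Suc m)"
    using qb_Q[of "Suc j" "Suc m"] True by simp
  ultimately show ?thesis using Q_nz by (metis mult_right_cancel)
qed


lemma qbinom0: "qbinom m 0 = 1" using qbinom_eq[of m 0] by simp
lemma qbinom_neg1: "qbinom m (-1) = 0" by (simp add: qbinom_def)

lemma cmul: "[:a:] * [:b:] = [:a * b :: 'a :: comm_semiring_1:]" by (simp add: mult.commute)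
lemma cadd: "[:a:] + [:b:] = [:a + b:]" by simp
lemma cpow: "[:a:] ^ k = [:a ^ k:]" by (induction k) (simp_all add: cmul mult.commute)
lemma qv_pow: "qv ^ k = [:monom 1 k:]"
  by (simp add: qv_def cpow monom_altdef)

definition tt :: "nat \<Rightarrow> nat \<Rightarrow> int poly poly" where
  "tt n j = [:monom 1 (j^2) * qb (n - j) j:] * xv ^ (n - 2 * j)"

lemma Fn_alt: "Fn n = (\<Sum>j\<le>n. tt n j)"
proof -
  have "Fn n = (\<Sum>j = 0..n div 2. tt n j)"
    unfolding Fn_def tt_def by (simp add: qbinom_eq qv_pow cmul mult_ac)
  also have "\<dots> = (\<Sum>j\<le>n. tt n j)"
  proof (rule sum.mono_neutral_left)
    show "\<forall>i\<in>{..n} - {0..n div 2}. tt n i = 0"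
      by (auto simp: tt_def qb_zero)
  qed auto
  finally show ?thesis .
qed

lemma tt_step: "j \<le> n \<Longrightarrow> tt (Suc (Suc n)) (Suc j) = xv * tt (Suc n) (Suc j) + qv ^ Suc n * tt n j"
proof (cases "2 * j \<le> n")
  case False
  then show ?thesis by (simp add: tt_def qb_zero)
next
  case True
  assume jn: "j \<le> n"
  have e1: "Suc (Suc n) - Suc j = Suc (n - j)" "Suc n - Suc j = n - j" using jn by auto
  have e2: "Suc (Suc n) - 2 * Suc j = n - 2 * j" by simp
  have p: "qb (Suc (n - j)) (Suc j) = monom 1 (n - j - j) * qb (n - j) j + qb (n - j) (Suc j)"
    by (rule pascal2)
  have x: "xv * tt (Suc n) (Suc j) = [:monom 1 ((Suc j)^2) * qb (n - j) (Suc j):] * xv ^ (n - 2 * j)"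
  proof (cases "2 * j + 1 \<le> n")
    case True
    have e3: "n - 2 * j = Suc (Suc n - 2 * Suc j)" using True by simp
    show ?thesis unfolding tt_def e1 e3 power_Suc by (simp only: ac_simps)
  next
    case False
    then show ?thesis unfolding tt_def e1 by (simp add: qb_zero)
  qed
  have mm: "monom (1::int) ((Suc j)^2) * monom 1 (n - j - j) = monom 1 (Suc n + j^2)"
    using True by (simp add: mult_monom power2_eq_square add.commute)
  have q: "qv ^ Suc n * tt n j = [:monom 1 ((Suc j)^2) * monom 1 (n - j - j) * qb (n - j) j:] * xv ^ (n - 2 * j)"
    unfolding tt_def qv_pow mult.assoc[symmetric] cmul mm by (simp add: mult_monom mult.assoc)
  have "tt (Suc (Suc n)) (Suc j) = [:monom 1 ((Suc j)^2) * (monom 1 (n - j - j) * qb (n - j) j + qb (n - j) (Suc j)):] * xv ^ (n - 2 * j)"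
    unfolding tt_def e1 e2 p ..
  also have "\<dots> = [:monom 1 ((Suc j)^2) * monom 1 (n - j - j) * qb (n - j) j:] * xv ^ (n - 2 * j)
     + [:monom 1 ((Suc j)^2) * qb (n - j) (Suc j):] * xv ^ (n - 2 * j)"
    by (simp only: distrib_left distrib_right cadd[symmetric] mult.assoc)
  also have "\<dots> = qv ^ Suc n * tt n j + xv * tt (Suc n) (Suc j)"
    unfolding x q ..
  finally show ?thesis by simp
qed

lemma Fn_rec: "Fn (Suc (Suc n)) = xv * Fn (Suc n) + qv ^ Suc n * Fn n"
proof -
  have a: "Fn (Suc (Suc n)) = tt (Suc (Suc n)) 0 + (\<Sum>j\<le>n. tt (Suc (Suc n)) (Suc j))"
  proof -
    have "Fn (Suc (Suc n)) = tt (Suc (Suc n)) 0 + (\<Sum>j\<le>Suc n. tt (Suc (Suc n)) (Suc j))"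
      unfolding Fn_alt by (rule sum.atMost_Suc_shift)
    also have "(\<Sum>j\<le>Suc n. tt (Suc (Suc n)) (Suc j)) = (\<Sum>j\<le>n. tt (Suc (Suc n)) (Suc j))"
      by (simp add: tt_def qb_zero)
    finally show ?thesis .
  qed
  have b: "xv * Fn (Suc n) = xv * tt (Suc n) 0 + (\<Sum>j\<le>n. xv * tt (Suc n) (Suc j))"
    unfolding Fn_alt sum.atMost_Suc_shift by (simp add: sum_distrib_left distrib_left)
  have c: "qv ^ Suc n * Fn n = (\<Sum>j\<le>n. qv ^ Suc n * tt n j)"
    unfolding Fn_alt by (simp add: sum_distrib_left)
  have d: "tt (Suc (Suc n)) 0 = xv * tt (Suc n) 0" by (simp add: tt_def)
  show ?thesis unfolding a b c d using tt_step by (simp add: sum.distrib)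
qed


lemma tridiag_det:
  fixes f :: "nat \<Rightarrow> nat \<Rightarrow> 'a :: comm_ring_1"
  assumes z: "\<And>i j. Suc i < j \<Longrightarrow> f i j = 0" "\<And>i j. Suc j < i \<Longrightarrow> f i j = 0"
  shows "det (mat (Suc (Suc n)) (Suc (Suc n)) (\<lambda>(i,j). f i j))
    = f (Suc n) (Suc n) * det (mat (Suc n) (Suc n) (\<lambda>(i,j). f i j))
      - f (Suc n) n * f n (Suc n) * det (mat n n (\<lambda>(i,j). f i j))"
proof -
  define A where "A = mat (Suc (Suc n)) (Suc (Suc n)) (\<lambda>(i,j). f i j)"
  have A: "A \<in> carrier_mat (Suc (Suc n)) (Suc (Suc n))" by (simp add: A_def)
  have "det A = (\<Sum>j<Suc (Suc n). A $$ (Suc n, j) * cofactor A (Suc n) j)"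
    by (rule laplace_expansion_row[OF A]) simp
  also have "\<dots> = A $$ (Suc n, n) * cofactor A (Suc n) n + A $$ (Suc n, Suc n) * cofactor A (Suc n) (Suc n)"
    by (simp add: A_def z)
  finally have 0: "det A = A $$ (Suc n, n) * cofactor A (Suc n) n + A $$ (Suc n, Suc n) * cofactor A (Suc n) (Suc n)" .
  have md: "mat_delete A (Suc n) (Suc n) = mat (Suc n) (Suc n) (\<lambda>(i,j). f i j)"
    by (rule eq_matI) (auto simp: A_def mat_delete_def)
  have "cofactor A (Suc n) (Suc n) = det (mat (Suc n) (Suc n) (\<lambda>(i,j). f i j))"
    unfolding cofactor_def md by simp
  with 0 have 1: "det A = A $$ (Suc n, n) * cofactor A (Suc n) n + f (Suc n) (Suc n) * det (mat (Suc n) (Suc n) (\<lambda>(i,j). f i j))"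
    by (simp add: A_def)
  define B where "B = mat_delete A (Suc n) n"
  have B: "B \<in> carrier_mat (Suc n) (Suc n)" by (simp add: B_def A_def mat_delete_def)
  have "det B = (\<Sum>i<Suc n. B $$ (i, n) * cofactor B i n)"
    by (rule laplace_expansion_column[OF B]) simp
  also have "\<dots> = B $$ (n, n) * cofactor B n n"
    by (simp add: B_def A_def mat_delete_def z)
  finally have b0: "det B = B $$ (n, n) * cofactor B n n" .
  have md2: "mat_delete B n n = mat n n (\<lambda>(i,j). f i j)"
    by (rule eq_matI) (auto simp: B_def A_def mat_delete_def)
  have "det B = f n (Suc n) * det (mat n n (\<lambda>(i,j). f i j))"
    unfolding b0 cofactor_def md2 by (simp add: B_def A_def mat_delete_def)
  then have "cofactor A (Suc n) n = - (f n (Suc n) * det (mat n n (\<lambda>(i,j). f i j)))"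
    by (simp add: cofactor_def B_def)
  then show ?thesis using 1 by (simp add: A_def algebra_simps)
qed


definition tf :: "nat \<Rightarrow> nat \<Rightarrow> int poly poly" where
  "tf k j = (if k = j then xv^2 else 0) + (if k = Suc j then qv ^ k * xv^2 else 0)
            - (if Suc k = j then 1 else 0)"

lemma tdet: "det (mat n n (\<lambda>(i,j). tf i j)) = xv ^ n * Fn n"
proof (induction n rule: less_induct)
  case (less n)
  show ?case
  proof (cases n)
    case 0 then show ?thesis by (simp add: Fn_def qbinom0)
  next
    case (Suc m)
    show ?thesis
    proof (cases m)
      case 0
      have "det (mat 1 1 (\<lambda>(i,j). tf i j)) = tf 0 0"
        by (subst det_single) auto
      then show ?thesis using Suc 0 by (simp add: tf_def Fn_def qbinom0 power2_eq_square)
    next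
      case (Suc k)
      have "det (mat n n (\<lambda>(i,j). tf i j)) = tf (Suc k) (Suc k) * det (mat (Suc k) (Suc k) (\<lambda>(i,j). tf i j))
        - tf (Suc k) k * tf k (Suc k) * det (mat k k (\<lambda>(i,j). tf i j))"
        unfolding \<open>n = Suc m\<close> Suc by (rule tridiag_det) (auto simp: tf_def)
      also have "\<dots> = xv^2 * (xv ^ Suc k * Fn (Suc k)) + qv ^ Suc k * xv^2 * (xv ^ k * Fn k)"
        using less.IH[of "Suc k"] less.IH[of k] \<open>n = Suc m\<close> Suc by (simp add: tf_def)
      also have "\<dots> = xv ^ n * Fn n"
        unfolding \<open>n = Suc m\<close> Suc Fn_rec by (simp add: algebra_simps power2_eq_square)
      finally show ?thesis .
    qed
  qed
qed

lemma prod_entry: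
  assumes "i < n" "j < n"
  shows "(\<Sum>k<n. [:qb i k:] * tf k j) = [:qbinom (i + 1) (int j + 1):] * xv ^ 2 - [:qbinom i (int j - 1):]"
proof -
  have s1: "(\<Sum>k<n. [:qb i k:] * (if k = j then xv^2 else 0)) = [:qb i j:] * xv^2"
    using assms by (simp add: if_distrib[of "\<lambda>x. _ * x"] cong: if_cong)
  have s2: "(\<Sum>k<n. [:qb i k:] * (if k = Suc j then qv ^ k * xv^2 else 0)) = [:qb i (Suc j):] * qv ^ Suc j * xv^2"
  proof (cases "Suc j < n")
    case True then show ?thesis by (simp add: if_distrib[of "\<lambda>x. _ * x"] mult.assoc cong: if_cong)
  next
    case False
    then have "qb i (Suc j) = 0" using assms by (simp add: qb_zero)
    then show ?thesis using False by (simp add: if_distrib[of "\<lambda>x. _ * x"] cong: if_cong)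
  qed
  have s3: "(\<Sum>k<n. [:qb i k:] * (if Suc k = j then 1 else 0)) = [:qbinom i (int j - 1):]"
  proof (cases j)
    case 0 then show ?thesis by (simp add: qbinom_neg1)
  next
    case (Suc j')
    then have "(\<Sum>k<n. [:qb i k:] * (if Suc k = j then 1 else 0)) = (\<Sum>k<n. if k = j' then [:qb i k:] else 0)"
      by (intro sum.cong) auto
    also have "\<dots> = [:qb i j':]" using assms Suc by simp
    finally show ?thesis using Suc by (simp add: qbinom_m1 qbinom_eq)
  qed
  have "(\<Sum>k<n. [:qb i k:] * tf k j) =
     (\<Sum>k<n. [:qb i k:] * (if k = j then xv^2 else 0)) + (\<Sum>k<n. [:qb i k:] * (if k = Suc j then qv ^ k * xv^2 else 0))
     - (\<Sum>k<n. [:qb i k:] * (if Suc k = j then 1 else 0))"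
    unfolding tf_def by (simp add: sum.distrib sum_subtractf distrib_left right_diff_distrib)
  also have "\<dots> = ([:qb i j:] + [:qb i (Suc j):] * qv ^ Suc j) * xv^2 - [:qbinom i (int j - 1):]"
    unfolding s1 s2 s3 by (simp add: algebra_simps)
  also have "[:qb i j:] + [:qb i (Suc j):] * qv ^ Suc j = [:qbinom (i + 1) (int j + 1):]"
  proof -
    have "qbinom (i + 1) (int j + 1) = qb (Suc i) (Suc j)"
      using qbinom_eq[of "Suc i" "Suc j"] by (simp add: add.commute)
    then show ?thesis unfolding qv_pow cmul cadd by (simp add: mult.commute)
  qed
  finally show ?thesis .
qed

theorem proposition8:
  fixes n :: nat
  assumes "n \<ge> 1"
  shows "det (mat n n (\<lambda>(i, j). [:qbinom (i + 1) (int j + 1):] * xv ^ 2 - [:qbinom i (int j - 1):]))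
         = xv ^ n * Fn n"
proof -
  define P where "P = mat n n (\<lambda>(i,k). [:qb i k:])"
  define T where "T = mat n n (\<lambda>(i,j). tf i j)"
  have "mat n n (\<lambda>(i, j). [:qbinom (i + 1) (int j + 1):] * xv ^ 2 - [:qbinom i (int j - 1):]) = P * T"
  proof (rule eq_matI)
    fix i j assume "i < dim_row (P * T)" "j < dim_col (P * T)"
    then have ij: "i < n" "j < n" by (auto simp: P_def T_def)
    have "(P * T) $$ (i, j) = (\<Sum>k<n. [:qb i k:] * tf k j)"
      using ij by (simp add: P_def T_def scalar_prod_def atLeast0LessThan)
    then show "mat n n (\<lambda>(i, j). [:qbinom (i + 1) (int j + 1):] * xv ^ 2 - [:qbinom i (int j - 1):]) $$ (i, j) = (P * T) $$ (i, j)"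
      using prod_entry[OF ij] ij by simp
  qed (auto simp: P_def T_def)
  moreover have "det (P * T) = det P * det T" 
  proof -
    have "P \<in> carrier_mat n n" "T \<in> carrier_mat n n" by (auto simp: P_def T_def)
    then show ?thesis by (rule det_mult)
  qed
  ultimately have "det (mat n n (\<lambda>(i, j). [:qbinom (i + 1) (int j + 1):] * xv ^ 2 - [:qbinom i (int j - 1):])) = det P * det T"
    by simp
  also have "det P = 1"
  proof -
    have "det P = prod_list (diag_mat P)"
    proof (rule det_lower_triangular[where n=n])
      show "P \<in> carrier_mat n n" by (simp add: P_def)
      fix i j assume "i < j" "j < n"
      then show "P $$ (i, j) = 0" by (simp add: P_def qb_zero)
    qed
    also have "diag_mat P = replicate n 1"
      by (rule nth_equalityI) (simp_all add: diag_mat_def P_def)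
    finally show ?thesis by simp
  qed
  finally show ?thesis using tdet by (simp add: T_def)
qed

end
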